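(* Let $\mathcal{C}=\{\mathcal{N}_1,\dots,\mathcal{N}_k\}$ be a clustering of a finite set of elements into $k$ clusters in which every element belongs to at least one and at most two clusters. If for every triple of distinct clusters $p,q,r\in[k]$ we have $\mathcal{N}_p\setminus(\mathcal{N}_q\cup\mathcal{N}_r)\neq\emptyset$, then every cluster $\mathcal{N}_i$ is maximal.
   Context: Two elements test positive if they belong to a common cluster. A cluster $\mathcal{N}_i$ is maximal if there is no element $x\notin\mathcal{N}_i$ that tests positive with every element of $\mathcal{N}_i$. *)

theory Defs
  imports Main
begin

definition is_clustering :: "'a set \<Rightarrow> nat \<Rightarrow> (nat \<Rightarrow> 'a set) \<Rightarrow> bool" where
  "is_clustering V k N \<longleftrightarrow> finite V \<and> (\<forall>i\<in>{1..k}. N i \<subseteq> V)"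

definition tests_positive :: "nat \<Rightarrow> (nat \<Rightarrow> 'a set) \<Rightarrow> 'a \<Rightarrow> 'a \<Rightarrow> bool" where
  "tests_positive k N x y \<longleftrightarrow> (\<exists>j\<in>{1..k}. x \<in> N j \<and> y \<in> N j)"

definition maximal_cluster :: "'a set \<Rightarrow> nat \<Rightarrow> (nat \<Rightarrow> 'a set) \<Rightarrow> nat \<Rightarrow> bool" where
  "maximal_cluster V k N i \<longleftrightarrow>
     \<not> (\<exists>x\<in>V. x \<notin> N i \<and> (\<forall>y\<in>N i. tests_positive k N x y))"

end

theory Submission
  imports Defs
begin

lemma pick_other:
  assumes "(k::nat) \<ge> 3" "i \<in> {1..k}" "q \<in> {1..k}"
  shows "\<exists>r\<in>{1..k}. r \<noteq> i \<and> r \<noteq> q"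
proof -
  have "card ({1..k} - {i, q}) \<ge> 1"
  proof -
    have "card ({1..k} - {i, q}) \<ge> card {1..k} - card {i,q}" by (rule diff_card_le_card_Diff) auto
    moreover have "card {i,q} \<le> 2" by (simp add: card_insert_le_m1)
    ultimately show ?thesis using assms(1) by simp
  qed
  then have "{1..k} - {i, q} \<noteq> {}" by (metis card.empty not_one_le_zero)
  then obtain r where "r \<in> {1..k} - {i, q}" by blast
  then show ?thesis by blast
qed

lemma cover_pair:
  assumes k: "(k::nat) \<ge> 3" and i: "i \<in> {1..k}" and S: "S \<subseteq> {1..k}" "i \<notin> S"
    and c: "card S \<le> 2" "card S \<ge> 1"
  shows "\<exists>q\<in>{1..k}. \<exists>r\<in>{1..k}. q \<noteq> r \<and> q \<noteq> i \<and> r \<noteq> i \<and> S \<subseteq> {q, r}"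
proof -
  have "card S = 1 \<or> card S = 2" using c by linarith
  then show ?thesis
  proof
    assume "card S = 1"
    then obtain q where q: "S = {q}" by (rule card_1_singletonE)
    then have q1: "q \<in> {1..k}" and q2: "q \<noteq> i" using S by auto
    obtain r where r: "r \<in> {1..k}" "r \<noteq> i" "r \<noteq> q" using pick_other[OF k i q1] by blast
    show ?thesis
      apply (rule bexI[of _ q], rule bexI[of _ r])
      using q q1 q2 r by auto
  next
    assume "card S = 2"
    then obtain q r where qr: "S = {q, r}" "q \<noteq> r" by (auto simp: card_2_iff)
    show ?thesis
      apply (rule bexI[of _ q], rule bexI[of _ r])
      using qr S by auto
  qed
qed

theorem lemma6:
  fixes V :: "'a set" and k :: nat and N :: "nat \<Rightarrow> 'a set"
  assumes clust: "is_clustering V k N"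
    and k3: "k \<ge> 3"
    and cover: "\<forall>x\<in>V. 1 \<le> card {i\<in>{1..k}. x \<in> N i} \<and> card {i\<in>{1..k}. x \<in> N i} \<le> 2"
    and triple: "\<forall>p\<in>{1..k}. \<forall>q\<in>{1..k}. \<forall>r\<in>{1..k}.
                   p \<noteq> q \<and> p \<noteq> r \<and> q \<noteq> r \<longrightarrow> N p - (N q \<union> N r) \<noteq> {}"
  shows "\<forall>i\<in>{1..k}. maximal_cluster V k N i"
proof
  fix i assume i: "i \<in> {1..k}"
  show "maximal_cluster V k N i"
    unfolding maximal_cluster_def
  proof
    assume "\<exists>x\<in>V. x \<notin> N i \<and> (\<forall>y\<in>N i. tests_positive k N x y)"
    then obtain x where x: "x \<in> V" "x \<notin> N i" and tp: "\<forall>y\<in>N i. tests_positive k N x y" by blast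
    define S where "S = {j\<in>{1..k}. x \<in> N j}"
    have "S \<subseteq> {1..k}" "i \<notin> S" using x S_def by auto
    moreover have "card S \<le> 2" "card S \<ge> 1" using cover x S_def by auto
    ultimately have "\<exists>q\<in>{1..k}. \<exists>r\<in>{1..k}. q \<noteq> r \<and> q \<noteq> i \<and> r \<noteq> i \<and> S \<subseteq> {q, r}"
      by (intro cover_pair[OF k3 i])
    then obtain q r where qr: "q \<in> {1..k}" "r \<in> {1..k}" "q \<noteq> r" "q \<noteq> i" "r \<noteq> i" "S \<subseteq> {q, r}"
      by blast
    have "N i - (N q \<union> N r) \<noteq> {}" using triple i qr by simp
    then obtain y where y: "y \<in> N i" "y \<notin> N q" "y \<notin> N r" by blast
    then obtain j where "j \<in> {1..k}" "x \<in> N j" "y \<in> N j" using tp unfolding tests_positive_def by blast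
    then have "j \<in> S" using S_def by auto
    with qr y \<open>y \<in> N j\<close> show False by auto
  qed
qed

end
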